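(* Let $n, r \geq 1$ and $q \geq 0$ be integers and let $\epsilon \in F(r,n)$ with $|\epsilon| = n$. Then \[(-1)^{n-r}\sum_{s_1, \ldots, s_r \geq 0} (-1)^{\sum_i s_i} \binom{n}{q - \sum_i s_i} \prod_{i=1}^r \left((s_i+1)^{\epsilon(i)} - s_i^{\epsilon(i)}\right) = (-1)^{n-q-r} \sum_{\substack{t \in F(r,q) \\ |t| = q}} \prod_{i=1}^r E(\epsilon(i), t(i)).\]
   Context: $F(r,k)$ denotes the set of functions $\epsilon: \{1,\ldots,r\} \to \{0,\ldots,k\}$, $|\epsilon| = \sum_i \epsilon(i)$. $E(m,j)$ is the Eulerian number (number of permutations of $\{1,\ldots,m\}$ with exactly $j$ descents) for $m \geq 1$, with $E(m,j) = 0$ if $m \leq 0$ or $j \notin\{0,\ldots,m-1\}$. Binomial coefficients $\binom{n}{j}$ vanish for $j<0$ or $j > n$, and $0^0 = 1$. *)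

theory Defs
  imports "HOL-Library.FuncSet" "HOL-Combinatorics.Permutations" Complex_Main
begin

definition Ffun :: "nat \<Rightarrow> nat \<Rightarrow> (nat \<Rightarrow> nat) set" where
  "Ffun r k = {1..r} \<rightarrow>\<^sub>E {0..k}"

definition fsize :: "nat \<Rightarrow> (nat \<Rightarrow> nat) \<Rightarrow> nat" where
  "fsize r e = (\<Sum>i=1..r. e i)"

definition eulerian :: "nat \<Rightarrow> nat \<Rightarrow> nat" where
  "eulerian m j = (if m = 0 then 0 else
     card {p. p permutes {1..m} \<and> card {i \<in> {1..<m}. p (Suc i) < p i} = j})"

definition binom_int :: "nat \<Rightarrow> int \<Rightarrow> nat" where
  "binom_int n j = (if j < 0 then 0 else n choose (nat j))"

end

theory Submission
  imports Defs "HOL-Computational_Algebra.Formal_Power_Series"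
begin

unbundle fps_syntax

fun des :: "nat list \<Rightarrow> nat" where
  "des [] = 0"
| "des [x] = 0"
| "des (x # y # zs) = (if y < x then 1 else 0) + des (y # zs)"

definition ins :: "nat \<Rightarrow> nat \<Rightarrow> nat list \<Rightarrow> nat list" where
  "ins k x xs = take k xs @ x # drop k xs"

lemma ins_0[simp]: "ins 0 x xs = x # xs" by (simp add: ins_def)
lemma ins_Suc[simp]: "ins (Suc k) x (y # ys) = y # ins k x ys" by (simp add: ins_def)
lemma ins_Nil[simp]: "ins k x [] = [x]" by (simp add: ins_def)

lemma des_ins_sum:
  fixes f :: "nat \<Rightarrow> 'a::comm_ring_1"
  assumes "\<forall>y\<in>set xs. y < M"
  shows "(\<Sum>k=0..length xs. f (des (ins k M xs))) =
     (of_nat (des xs) + 1) * f (des xs) + (of_nat (length xs) - of_nat (des xs)) * f (Suc (des xs))"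
  using assms
proof (induction xs arbitrary: f)
  case Nil
  then show ?case by simp
next
  case (Cons y ys)
  show ?case
  proof (cases ys)
    case Nil
    with Cons.prems show ?thesis by (simp add: algebra_simps)
  next
    case (Cons z zs)
    define c where "c = (if z < y then 1 else 0::nat)"
    have yM: "y < M" using Cons.prems by auto
    have IH: "(\<Sum>k=0..length ys. f (c + des (ins k M ys))) =
       (of_nat (des ys) + 1) * f (c + des ys) + (of_nat (length ys) - of_nat (des ys)) * f (c + Suc (des ys))"
      using Cons.IH[of "\<lambda>d. f (c + d)"] Cons.prems by auto
    have split: "(\<Sum>k=0..length ys. f (c + des (ins k M ys))) = f (c + des (ins 0 M ys)) + (\<Sum>k=1..length ys. f (c + des (ins k M ys)))"
      by (simp add: sum.atLeast_Suc_atMost)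
    have d0: "des (ins 0 M ys) = Suc (des ys)" using yM Cons.prems \<open>ys = z # zs\<close> by simp
    have "(\<Sum>k=1..length ys. f (des (ins (Suc k) M (y # ys)))) = (\<Sum>k=1..length ys. f (c + des (ins k M ys)))"
    proof (rule sum.cong)
      fix k assume "k \<in> {1..length ys}"
      then obtain k' where "k = Suc k'" by (cases k) auto
      then show "f (des (ins (Suc k) M (y # ys))) = f (c + des (ins k M ys))"
        using \<open>ys = z # zs\<close> by (simp add: c_def)
    qed simp
    have "(\<Sum>k=0..length (y#ys). f (des (ins k M (y # ys)))) =
        f (des (M # y # ys)) + f (des (y # M # ys)) + (\<Sum>k=1..length ys. f (des (ins (Suc k) M (y # ys))))"
    proof -
      have "(\<Sum>k=0..length (y#ys). f (des (ins k M (y # ys)))) = f (des (ins 0 M (y # ys))) + (\<Sum>k=0..length ys. f (des (ins (Suc k) M (y # ys))))"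
        by (simp only: length_Cons sum.atLeast0_atMost_Suc_shift o_def)
      also have "(\<Sum>k=0..length ys. f (des (ins (Suc k) M (y # ys)))) = f (des (ins (Suc 0) M (y # ys))) + (\<Sum>k=1..length ys. f (des (ins (Suc k) M (y # ys))))"
        by (simp add: sum.atLeast_Suc_atMost)
      finally show ?thesis by simp
    qed
    also have "\<dots> = f (Suc (c + des ys)) + f (Suc (des ys)) + ((of_nat (des ys) + 1) * f (c + des ys) + (of_nat (length ys) - of_nat (des ys)) * f (c + Suc (des ys)) - f (c + Suc (des ys)))"
      using \<open>(\<Sum>k=1..length ys. _) = _\<close> IH split d0 yM \<open>ys = z # zs\<close> by (simp add: c_def)
    also have "\<dots> = (of_nat (des (y#ys)) + 1) * f (des (y#ys)) + (of_nat (length (y#ys)) - of_nat (des (y#ys))) * f (Suc (des (y#ys)))"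
      using \<open>ys = z # zs\<close> by (simp add: c_def algebra_simps)
    finally show ?thesis .
  qed
qed


definition Lset :: "nat \<Rightarrow> nat list set" where
  "Lset m = {xs. distinct xs \<and> set xs = {1..m}}"

lemma Lset_length: "xs \<in> Lset m \<Longrightarrow> length xs = m"
  unfolding Lset_def using distinct_card by fastforce

lemma Lset_finite: "finite (Lset m)"
proof (rule finite_subset)
  show "Lset m \<subseteq> {xs. set xs \<subseteq> {1..m} \<and> length xs = m}"
    using Lset_length by (auto simp: Lset_def)
  show "finite {xs. set xs \<subseteq> {1..m} \<and> length xs = m}"
    by (rule finite_lists_length_eq) simp
qed

lemma Lset_0: "Lset 0 = {[]}"
  by (auto simp: Lset_def)

lemma ins_bij: "bij_betw (\<lambda>(xs,k). ins k (Suc m) xs) (Lset m \<times> {0..m}) (Lset (Suc m))"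
proof (rule bij_betw_imageI)
  show "inj_on (\<lambda>(xs,k). ins k (Suc m) xs) (Lset m \<times> {0..m})"
  proof (rule inj_onI, clarify)
    fix xs k xs' k'
    assume A: "xs \<in> Lset m" "k \<in> {0..m}" "xs' \<in> Lset m" "k' \<in> {0..m}"
      and E: "ins k (Suc m) xs = ins k' (Suc m) xs'"
    have n1: "Suc m \<notin> set xs" "Suc m \<notin> set xs'" using A by (auto simp: Lset_def)
    have "Suc m \<notin> set (take k xs)" "Suc m \<notin> set (drop k xs)"
      using n1 by (meson in_set_takeD in_set_dropD)+
    with E have "take k xs = take k' xs' \<and> drop k xs = drop k' xs'"
      unfolding ins_def by (subst (asm) append_Cons_eq_iff) auto
    then have T: "take k xs = take k' xs'" and "xs = xs'"
      by (metis append_take_drop_id)+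
    have "length (take k xs) = length (take k' xs')" by (simp only: T)
    then have "min (length xs) k = min (length xs') k'" by simp
    note this \<open>xs = xs'\<close>
    moreover have "length xs = m" "length xs' = m" using A Lset_length by auto
    ultimately show "xs = xs' \<and> k = k'" using A by (auto simp: min_def split: if_splits)
  qed
next
  show "(\<lambda>(xs,k). ins k (Suc m) xs) ` (Lset m \<times> {0..m}) = Lset (Suc m)"
  proof
    show "(\<lambda>(xs,k). ins k (Suc m) xs) ` (Lset m \<times> {0..m}) \<subseteq> Lset (Suc m)"
    proof clarify
      fix xs k assume A: "xs \<in> Lset m" "k \<in> {0..m}"
      have "set (ins k (Suc m) xs) = insert (Suc m) (set xs)"
        unfolding ins_def by (metis Un_insert_right append_take_drop_id set_append list.simps(15))
      moreover have "distinct (ins k (Suc m) xs)"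
      proof -
        have dx: "distinct (take k xs @ drop k xs)" and nx: "Suc m \<notin> set xs"
          using A by (auto simp: Lset_def)
        then have "distinct (take k xs)" "distinct (drop k xs)" "set (take k xs) \<inter> set (drop k xs) = {}"
          by (simp_all only: distinct_append)
        then show ?thesis using nx by (auto simp: ins_def dest: in_set_takeD in_set_dropD)
      qed
      ultimately show "ins k (Suc m) xs \<in> Lset (Suc m)"
        using A by (auto simp: Lset_def)
    qed
  next
    show "Lset (Suc m) \<subseteq> (\<lambda>(xs,k). ins k (Suc m) xs) ` (Lset m \<times> {0..m})"
    proof
      fix ys assume Y: "ys \<in> Lset (Suc m)"
      then have "Suc m \<in> set ys" by (auto simp: Lset_def)
      then obtain as bs where ys: "ys = as @ Suc m # bs" by (meson split_list)
      have dys: "distinct ys" "set ys = {1..Suc m}" using Y by (auto simp: Lset_def)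
      have "as @ bs \<in> Lset m"
      proof -
        have "distinct (as @ bs)" using dys ys by auto
        moreover have "set (as @ bs) = set ys - {Suc m}" using dys ys by auto
        then have "set (as @ bs) = {1..m}" using dys by auto
        ultimately show ?thesis by (simp add: Lset_def)
      qed
      moreover have "length as \<in> {0..m}" using Lset_length[OF calculation] by simp
      moreover have "ins (length as) (Suc m) (as @ bs) = ys" by (simp add: ins_def ys)
      ultimately show "ys \<in> (\<lambda>(xs,k). ins k (Suc m) xs) ` (Lset m \<times> {0..m})"
        by (metis (no_types, lifting) SigmaI case_prod_conv image_eqI)
    qed
  qed
qed

lemma sum_Lset_Suc:
  "(\<Sum>ys\<in>Lset (Suc m). g ys) = (\<Sum>xs\<in>Lset m. \<Sum>k=0..m. g (ins k (Suc m) xs))"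
proof -
  have "(\<Sum>ys\<in>Lset (Suc m). g ys) = (\<Sum>p\<in>Lset m \<times> {0..m}. g ((\<lambda>(xs,k). ins k (Suc m) xs) p))"
    using sum.reindex_bij_betw[OF ins_bij, of g] by (metis (no_types, lifting) sum.cong)
  also have "\<dots> = (\<Sum>xs\<in>Lset m. \<Sum>k=0..m. g (ins k (Suc m) xs))"
    by (simp add: sum.cartesian_product Lset_finite prod.case_distrib)
  finally show ?thesis .
qed

definition Apoly :: "nat \<Rightarrow> real fps" where
  "Apoly m = (\<Sum>xs\<in>Lset m. fps_X ^ des xs)"

lemma deriv_X_Suc: "fps_deriv ((fps_X::real fps) ^ Suc k) = of_nat (Suc k) * fps_X ^ k"
  by (simp only: fps_deriv_power' fps_deriv_fps_X diff_Suc_1 mult_1_right)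

lemma term_eq:
  "(of_nat d + 1) * (fps_X::real fps) ^ d + (of_nat m - of_nat d) * fps_X ^ Suc d
   = (1 + of_nat m * fps_X) * fps_X ^ d + fps_X * (1 - fps_X) * fps_deriv (fps_X ^ d)"
  by (cases d) (simp_all only: deriv_X_Suc, simp_all add: algebra_simps)

lemma Apoly_rec:
  "Apoly (Suc m) = (1 + of_nat m * fps_X) * Apoly m + fps_X * (1 - fps_X) * fps_deriv (Apoly m)"
proof -
  have "Apoly (Suc m) = (\<Sum>xs\<in>Lset m. \<Sum>k=0..m. fps_X ^ des (ins k (Suc m) xs))"
    unfolding Apoly_def by (rule sum_Lset_Suc)
  also have "\<dots> = (\<Sum>xs\<in>Lset m. (of_nat (des xs) + 1) * fps_X ^ des xs + (of_nat m - of_nat (des xs)) * fps_X ^ Suc (des xs))"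
  proof (rule sum.cong)
    fix xs assume X: "xs \<in> Lset m"
    then have "length xs = m" "\<forall>y\<in>set xs. y < Suc m" by (auto simp: Lset_length Lset_def)
    then show "(\<Sum>k=0..m. fps_X ^ des (ins k (Suc m) xs)) = (of_nat (des xs) + 1) * (fps_X::real fps) ^ des xs + (of_nat m - of_nat (des xs)) * fps_X ^ Suc (des xs)"
      using des_ins_sum[of xs "Suc m" "\<lambda>d. (fps_X::real fps) ^ d"] by simp
  qed simp
  also have "\<dots> = (\<Sum>xs\<in>Lset m. (1 + of_nat m * fps_X) * fps_X ^ des xs + fps_X * (1 - fps_X) * fps_deriv (fps_X ^ des xs))"
    by (simp only: term_eq)
  also have "\<dots> = (1 + of_nat m * fps_X) * Apoly m + fps_X * (1 - fps_X) * fps_deriv (Apoly m)"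
    unfolding Apoly_def by (simp add: sum.distrib sum_distrib_left fps_deriv_sum)
  finally show ?thesis .
qed

definition Hser :: "nat \<Rightarrow> real fps" where
  "Hser m = Abs_fps (\<lambda>s. real (s+1) ^ m)"

lemma Hser_Suc: "Hser (Suc m) = fps_deriv (fps_X * Hser m)"
  by (rule fps_ext) (auto simp add: Hser_def fps_X_mult_nth algebra_simps)

lemma Hser_main: "Hser m * (1 - fps_X) ^ Suc m = Apoly m"
proof (induction m)
  case 0
  have "Hser 0 * (1 - fps_X) = 1"
    by (rule fps_ext) (simp add: Hser_def algebra_simps fps_X_mult_nth)
  then show ?case by (simp add: Apoly_def Lset_0)
next
  case (Suc m)
  define H where "H = Hser m"
  define A where "A = Apoly m"
  define K where "K = fps_X * H"
  define U where "U = (1 - fps_X :: real fps) ^ Suc m"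
  have KU: "K * U = fps_X * A" unfolding K_def U_def H_def A_def using Suc.IH by (metis mult.assoc)
  have dU: "fps_deriv U = - (of_nat (Suc m)) * (1 - fps_X) ^ m"
  proof -
    have "fps_deriv U = of_nat (Suc m) * fps_deriv (1 - fps_X) * (1-fps_X)^m"
      by (simp only: U_def fps_deriv_power' diff_Suc_1)
    then show ?thesis by simp
  qed
  have D: "K * fps_deriv U + fps_deriv K * U = fps_X * fps_deriv A + A"
    using arg_cong[OF KU, of fps_deriv] by (simp add: algebra_simps)
  have "Hser (Suc m) * (1 - fps_X) ^ Suc (Suc m) = (1 - fps_X) * (fps_deriv K * U)"
    by (simp add: Hser_Suc K_def H_def U_def algebra_simps)
  also have "\<dots> = (1 - fps_X) * (fps_X * fps_deriv A + A - K * fps_deriv U)"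
  proof -
    have "fps_deriv K * U = (K * fps_deriv U + fps_deriv K * U) - K * fps_deriv U" by simp
    also have "\<dots> = (fps_X * fps_deriv A + A) - K * fps_deriv U" by (simp only: D)
    finally show ?thesis by simp
  qed
  also have "(1 - fps_X) * (K * fps_deriv U) = - of_nat (Suc m) * (K * U)"
  proof -
    have "(1 - fps_X) * fps_deriv U = - of_nat (Suc m) * U"
      by (simp only: dU) (simp add: U_def algebra_simps)
    then show ?thesis by (metis mult.left_commute mult.assoc)
  qed
  then have "(1 - fps_X) * (fps_X * fps_deriv A + A - K * fps_deriv U) = (1 - fps_X) * (fps_X * fps_deriv A + A) + of_nat (Suc m) * (K * U)"
    by (simp add: algebra_simps)
  also have "\<dots> = Apoly (Suc m)"
    by (simp add: KU Apoly_rec A_def algebra_simps)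
  finally show ?case .
qed



lemma des_sum: "des xs = (\<Sum>i<length xs - 1. if xs ! Suc i < xs ! i then 1 else 0)"
  by (induction xs rule: des.induct) (simp_all add: sum.lessThan_Suc_shift del: sum.lessThan_Suc)

lemma card_filter_sum: "finite A \<Longrightarrow> card {x\<in>A. P x} = (\<Sum>x\<in>A. if P x then 1 else 0)"
  using sum.inter_filter[of A "\<lambda>_. (1::nat)" P] by simp

definition Dp :: "nat \<Rightarrow> (nat \<Rightarrow> nat) \<Rightarrow> nat" where
  "Dp m p = card {i \<in> {1..<m}. p (Suc i) < p i}"

lemma Dp_des: "Dp m p = des (map p [1..<Suc m])"
proof -
  have "Dp m p = (\<Sum>i\<in>{1..<m}. if p (Suc i) < p i then 1 else 0)"
    unfolding Dp_def using card_filter_sum[of "{1..<m}" "\<lambda>i. p (Suc i) < p i"] by simp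
  also have "\<dots> = (\<Sum>i\<in>{0..<m-1}. if p (Suc (Suc i)) < p (Suc i) then 1 else 0)"
  proof (cases m)
    case 0 then show ?thesis by simp
  next
    case (Suc m') then show ?thesis
      using sum.shift_bounds_Suc_ivl[of "\<lambda>i. if p (Suc i) < p i then 1 else (0::nat)" 0 m'] by simp
  qed
  also have "\<dots> = des (map p [1..<Suc m])"
    unfolding des_sum by (intro sum.cong) (auto simp del: upt_Suc simp: lessThan_atLeast0)
  finally show ?thesis .
qed

lemma eulerian_Lset:
  assumes "m \<ge> 1"
  shows "eulerian m j = card {xs \<in> Lset m. des xs = j}"
proof -
  have "bij_betw (\<lambda>p. map p [1..<Suc m]) {p. p permutes {1..m} \<and> Dp m p = j} {xs \<in> Lset m. des xs = j}"
  proof (rule bij_betw_imageI)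
    show "inj_on (\<lambda>p. map p [1..<Suc m]) {p. p permutes {1..m} \<and> Dp m p = j}"
    proof (rule inj_onI)
      fix p p' assume P: "p \<in> {p. p permutes {1..m} \<and> Dp m p = j}" "p' \<in> {p. p permutes {1..m} \<and> Dp m p = j}"
        and E: "map p [1..<Suc m] = map p' [1..<Suc m]"
      show "p = p'"
      proof
        fix i show "p i = p' i"
        proof (cases "i \<in> {1..m}")
          case True
          have "\<forall>x\<in>set [1..<Suc m]. p x = p' x" using E by (simp only: map_eq_conv)
          then show ?thesis using True by (simp del: upt_Suc)
        next
          case False then show ?thesis
            using permutes_not_in[of p "{1..m}" i] permutes_not_in[of p' "{1..m}" i] P by simp
        qed
      qed
    qed
  next
    show "(\<lambda>p. map p [1..<Suc m]) ` {p. p permutes {1..m} \<and> Dp m p = j} = {xs \<in> Lset m. des xs = j}"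
    proof
      show "(\<lambda>p. map p [1..<Suc m]) ` {p. p permutes {1..m} \<and> Dp m p = j} \<subseteq> {xs \<in> Lset m. des xs = j}"
      proof clarify
        fix p assume p: "p permutes {1..m}" "j = Dp m p"
        have "distinct (map p [1..<Suc m])"
          using permutes_inj_on[OF p(1)] by (simp add: distinct_map)
        moreover have "set (map p [1..<Suc m]) = {1..m}"
          using permutes_image[OF p(1)] by (simp del: upt_Suc add: atLeastLessThanSuc_atLeastAtMost)
        ultimately show "map p [1..<Suc m] \<in> Lset m \<and> des (map p [1..<Suc m]) = Dp m p"
          by (simp add: Lset_def Dp_des)
      qed
    next
      show "{xs \<in> Lset m. des xs = j} \<subseteq> (\<lambda>p. map p [1..<Suc m]) ` {p. p permutes {1..m} \<and> Dp m p = j}"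
      proof
        fix xs assume X: "xs \<in> {xs \<in> Lset m. des xs = j}"
        then have L: "length xs = m" and D: "distinct xs" and S: "set xs = {1..m}" and J: "des xs = j"
          by (auto simp: Lset_length Lset_def)
        define p where "p = (\<lambda>i. if i \<in> {1..m} then xs ! (i - 1) else i)"
        have mp: "map p [1..<Suc m] = xs"
          by (rule nth_equalityI) (auto simp del: upt_Suc simp: L p_def)
        have "inj_on p {1..m}"
          using D L by (auto simp: inj_on_def p_def nth_eq_iff_index_eq)
        moreover have "p ` {1..m} = {1..m}"
        proof -
          have "p ` {1..m} = set (map p [1..<Suc m])" by (simp del: upt_Suc add: atLeastLessThanSuc_atLeastAtMost)
          then show ?thesis using mp S by (simp only:)
        qed
        ultimately have "bij_betw p {1..m} {1..m}" by (simp add: bij_betw_def)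
        then have "p permutes {1..m}" by (rule bij_imp_permutes) (auto simp add: p_def)
        moreover have "Dp m p = j" using Dp_des mp J by simp
        ultimately show "xs \<in> (\<lambda>p. map p [1..<Suc m]) ` {p. p permutes {1..m} \<and> Dp m p = j}"
          using mp by force
      qed
    qed
  qed
  then have "card {p. p permutes {1..m} \<and> Dp m p = j} = card {xs \<in> Lset m. des xs = j}"
    by (rule bij_betw_same_card)
  then show ?thesis using assms by (simp add: eulerian_def Dp_def)
qed

definition Eser :: "nat \<Rightarrow> real fps" where
  "Eser m = Abs_fps (\<lambda>j. real (eulerian m j))"

definition Gser :: "nat \<Rightarrow> real fps" where
  "Gser m = Abs_fps (\<lambda>s. real (s+1) ^ m - real s ^ m)"

lemma Apoly_nth: "Apoly m $ j = real (card {xs \<in> Lset m. des xs = j})"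
proof -
  have "Apoly m $ j = (\<Sum>xs\<in>Lset m. if j = des xs then 1 else 0)"
    by (simp add: Apoly_def fps_sum_nth)
  also have "\<dots> = real (card {xs \<in> Lset m. des xs = j})"
  proof -
    have "real (card {xs \<in> Lset m. des xs = j}) = real (\<Sum>xs\<in>Lset m. if des xs = j then 1 else 0)"
      using card_filter_sum[OF Lset_finite, of m "\<lambda>xs. des xs = j"] by (simp only:)
    also have "\<dots> = (\<Sum>xs\<in>Lset m. real (if des xs = j then 1 else 0))" by (rule of_nat_sum)
    also have "\<dots> = (\<Sum>xs\<in>Lset m. if j = des xs then 1 else 0)" by (rule sum.cong) auto
    finally show ?thesis by simp
  qed
  finally show ?thesis .
qed

lemma Gser_main: "Gser m * (1 - fps_X) ^ m = Eser m"
proof (cases m)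
  case 0
  have "Gser 0 = 0" "Eser 0 = 0" by (auto intro!: fps_ext simp: Gser_def Eser_def eulerian_def)
  then show ?thesis using 0 by simp
next
  case (Suc k)
  have G: "Gser m = (1 - fps_X) * Hser m"
    by (rule fps_ext) (auto simp: Gser_def Hser_def fps_X_mult_nth algebra_simps Suc)
  have "Apoly m = Eser m"
    by (rule fps_ext) (simp add: Apoly_nth Eser_def eulerian_Lset Suc)
  have "Gser m * (1 - fps_X) ^ m = Hser m * ((1 - fps_X) * (1 - fps_X) ^ m)"
    by (simp only: G mult.commute mult.left_commute)
  also have "\<dots> = Hser m * (1 - fps_X) ^ Suc m" by (simp only: power_Suc)
  finally show ?thesis using Hser_main[of m] \<open>Apoly m = Eser m\<close> by (simp only:)
qed



lemma prod_coef:
  fixes f :: "nat \<Rightarrow> real fps"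
  assumes "finite I"
  shows "(\<Prod>i\<in>I. f i) $ q = (\<Sum>s\<in>{s\<in>I \<rightarrow>\<^sub>E {0..q}. sum s I = q}. \<Prod>i\<in>I. f i $ s i)"
  using assms
proof (induction I arbitrary: q rule: finite_induct)
  case empty
  show ?case
  proof (cases "q = 0")
    case True
    then have "{s\<in>{} \<rightarrow>\<^sub>E {0..q}. sum s {} = q} = {\<lambda>_. undefined}" by auto
    then show ?thesis using True by simp
  next
    case False
    then have "{s\<in>{} \<rightarrow>\<^sub>E {0..q}. sum s {} = q} = {}" by auto
    then show ?thesis using False by simp
  qed
next
  case (insert a I)
  define S where "S (J::nat set) k = {s\<in>J \<rightarrow>\<^sub>E {0..k}. sum s J = (k::nat)}" for J k
  define h where "h t = (\<Prod>i\<in>insert a I. f i $ t i)" for t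
  have finS: "finite (S J k)" if "finite J" for J k
    unfolding S_def using that by (rule_tac finite_subset[of _ "J \<rightarrow>\<^sub>E {0..k}"]) (auto intro: finite_PiE)
  have "(\<Prod>i\<in>insert a I. f i) $ q = (\<Sum>j=0..q. f a $ j * (\<Prod>i\<in>I. f i) $ (q - j))"
    using insert.hyps by (simp add: fps_mult_nth)
  also have "\<dots> = (\<Sum>j=0..q. \<Sum>s\<in>S I (q-j). h (s(a:=j)))"
  proof (rule sum.cong)
    fix j assume "j \<in> {0..q}"
    have "f a $ j * (\<Prod>i\<in>I. f i) $ (q - j) = (\<Sum>s\<in>S I (q-j). f a $ j * (\<Prod>i\<in>I. f i $ s i))"
      by (simp add: insert.IH S_def sum_distrib_left)
    also have "\<dots> = (\<Sum>s\<in>S I (q-j). h (s(a:=j)))"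
    proof (rule sum.cong)
      fix s assume "s \<in> S I (q-j)"
      have "(\<Prod>i\<in>I. f i $ (s(a:=j)) i) = (\<Prod>i\<in>I. f i $ s i)"
        using insert.hyps by (intro prod.cong) auto
      then show "f a $ j * (\<Prod>i\<in>I. f i $ s i) = h (s(a:=j))"
        unfolding h_def using insert.hyps by simp
    qed simp
    finally show "f a $ j * (\<Prod>i\<in>I. f i) $ (q - j) = (\<Sum>s\<in>S I (q-j). h (s(a:=j)))" .
  qed simp
  also have "\<dots> = (\<Sum>(j,s)\<in>Sigma {0..q} (\<lambda>j. S I (q-j)). h (s(a:=j)))"
    by (rule sum.Sigma) (auto intro: finS insert.hyps)
  also have "\<dots> = (\<Sum>t\<in>S (insert a I) q. h t)"
  proof -
    have bij: "bij_betw (\<lambda>(j, s). s(a := j)) (SIGMA j:{0..q}. S I (q - j)) (S (insert a I) q)"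
    proof (rule bij_betw_imageI)
      show "inj_on (\<lambda>(j, s). s(a := j)) (SIGMA j:{0..q}. S I (q - j))"
      proof (rule inj_onI, clarify)
        fix j s j' s'
        assume A: "j \<in> {0..q}" "s \<in> S I (q - j)" "j' \<in> {0..q}" "s' \<in> S I (q - j')"
          and E: "s(a := j) = s'(a := j')"
        have "s a = undefined" "s' a = undefined" using A insert.hyps by (auto simp: S_def PiE_def extensional_def)
        then have "s = (s(a := j))(a := undefined)" "s' = (s'(a := j'))(a := undefined)" by auto
        with E have "s = s'" by simp
        moreover have "j = j'" using fun_cong[OF E, of a] by simp
        ultimately show "j = j' \<and> s = s'" by simp
      qed
    next
      show "(\<lambda>(j, s). s(a := j)) ` (SIGMA j:{0..q}. S I (q - j)) = S (insert a I) q"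
      proof
        show "(\<lambda>(j, s). s(a := j)) ` (SIGMA j:{0..q}. S I (q - j)) \<subseteq> S (insert a I) q"
        proof clarify
          fix j s assume A: "j \<in> {0..q}" "s \<in> S I (q - j)"
          have "sum (s(a:=j)) I = sum s I" using insert.hyps by (intro sum.cong) auto
          then have "sum (s(a:=j)) (insert a I) = j + (q - j)"
            using A insert.hyps by (simp add: S_def)
          moreover have "s(a:=j) \<in> insert a I \<rightarrow>\<^sub>E {0..q}"
            using A insert.hyps by (auto simp: S_def PiE_def extensional_def Pi_def)
          ultimately show "s(a:=j) \<in> S (insert a I) q" using A by (simp add: S_def)
        qed
      next
        show "S (insert a I) q \<subseteq> (\<lambda>(j, s). s(a := j)) ` (SIGMA j:{0..q}. S I (q - j))"
        proof
          fix t assume T: "t \<in> S (insert a I) q"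
          define s where "s = t(a := undefined)"
          have tPi: "t \<in> insert a I \<rightarrow>\<^sub>E {0..q}" and ts: "sum t (insert a I) = q" using T by (auto simp: S_def)
          have sI: "sum s I = sum t I" unfolding s_def using insert.hyps by (intro sum.cong) auto
          have ts2: "t a + sum t I = q" using ts insert.hyps by simp
          have "s \<in> I \<rightarrow>\<^sub>E {0..q - t a}"
          proof -
            have "t i \<le> sum t I" if "i \<in> I" for i
              using that insert.hyps by (intro member_le_sum) auto
            then show ?thesis using tPi ts2 insert.hyps
              by (auto simp: s_def PiE_def extensional_def Pi_def)
          qed
          then have "s \<in> S I (q - t a)" using sI ts2 by (simp add: S_def)
          moreover have "t a \<in> {0..q}" using ts2 by simp
          moreover have "s(a := t a) = t" by (simp add: s_def)
          ultimately show "t \<in> (\<lambda>(j, s). s(a := j)) ` (SIGMA j:{0..q}. S I (q - j))"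
            by (metis (no_types, lifting) SigmaI case_prod_conv image_eqI)
        qed
      qed
    qed
    show ?thesis using sum.reindex_bij_betw[OF bij, of h] by (simp add: prod.case_distrib)
  qed
  finally show ?case by (simp add: S_def h_def)
qed



definition flip :: "real fps \<Rightarrow> real fps" where
  "flip f = Abs_fps (\<lambda>n. (-1)^n * f $ n)"

lemma flip_nth: "flip f $ n = (-1)^n * f $ n" by (simp add: flip_def)

lemma flip_mult: "flip (f * g) = flip f * flip g"
proof (rule fps_ext)
  fix n
  have "flip (f * g) $ n = (\<Sum>i=0..n. (-1)^n * (f$i * g$(n - i)))"
    by (simp add: flip_def fps_mult_nth sum_distrib_left)
  also have "\<dots> = (\<Sum>i=0..n. ((-1)^i * f$i) * ((-1)^(n-i) * g$(n - i)))"
  proof (rule sum.cong)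
    fix i assume "i \<in> {0..n}"
    then have "(-1::real)^n = (-1)^i * (-1)^(n-i)" by (simp flip: power_add)
    then show "(-1)^n * (f$i * g$(n - i)) = ((-1)^i * f$i) * ((-1)^(n-i) * g$(n - i))"
      by simp
  qed simp
  also have "\<dots> = (flip f * flip g) $ n" by (simp add: flip_def fps_mult_nth)
  finally show "flip (f * g) $ n = (flip f * flip g) $ n" .
qed

lemma flip_one: "flip 1 = 1"
  by (rule fps_ext) (simp add: flip_def)

lemma flip_1mX: "flip (1 - fps_X) = 1 + fps_X"
  by (rule fps_ext) (simp add: flip_def fps_X_def)

lemma flip_power: "flip (f ^ k) = flip f ^ k"
  by (induction k) (simp_all add: flip_one flip_mult)

lemma flip_prod: "flip (\<Prod>i\<in>I. f i) = (\<Prod>i\<in>I. flip (f i))"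
proof (cases "finite I")
  case True then show ?thesis
    by (induction I rule: finite_induct) (simp_all add: flip_one flip_mult)
next
  case False then show ?thesis by (simp add: flip_one)
qed

lemma binom_coef: "((1 + fps_X :: real fps) ^ n) $ k = real (n choose k)"
proof -
  have "((1 + fps_X :: real fps) ^ n) $ k = fps_binomial (of_nat n) $ k"
    by (simp add: fps_binomial_of_nat)
  also have "\<dots> = real (n choose k)" by (simp add: binomial_gbinomial)
  finally show ?thesis .
qed

lemma prod_sign:
  "(\<Prod>i\<in>I. (-1::real) ^ s i * x i) = (-1) ^ (sum s I) * (\<Prod>i\<in>I. x i)"
  by (simp add: prod.distrib power_sum)



theorem proposition3p6:
  fixes n r q :: nat and eps :: "nat \<Rightarrow> nat"
  assumes "n \<ge> 1" and "r \<ge> 1"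
    and "eps \<in> Ffun r n" and "fsize r eps = n"
  shows "(-1::real) powi (int n - int r) *
      (\<Sum>s\<in>Ffun r q. (-1::real) ^ (fsize r s) * real (binom_int n (int q - int (fsize r s))) *
         (\<Prod>i=1..r. (real (s i) + 1) ^ (eps i) - real (s i) ^ (eps i)))
    = (-1::real) powi (int n - int q - int r) *
      (\<Sum>t\<in>{t\<in>Ffun r q. fsize r t = q}. \<Prod>i=1..r. real (eulerian (eps i) (t i)))"
proof -
  define I where "I = {1..r}"
  have finI: "finite I" by (simp add: I_def)
  define P where "P s i = (real (s i) + 1) ^ (eps i) - real (s i) ^ (eps i)" for s :: "nat \<Rightarrow> nat" and i
  define Sa where "Sa a = {s \<in> I \<rightarrow>\<^sub>E {0..a}. sum s I = a}" for a :: nat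
  define G where "G i = flip (Gser (eps i))" for i
  define Ev where "Ev i = flip (Eser (eps i))" for i
  define EE where "EE = (\<Sum>t\<in>{t\<in>Ffun r q. fsize r t = q}. \<Prod>i=1..r. real (eulerian (eps i) (t i)))"
  define LL where "LL = (\<Sum>s\<in>Ffun r q. (-1::real) ^ (fsize r s) * real (binom_int n (int q - int (fsize r s))) *
         (\<Prod>i=1..r. (real (s i) + 1) ^ (eps i) - real (s i) ^ (eps i)))"
  have Gi: "G i * (1 + fps_X) ^ eps i = Ev i" for i
    using arg_cong[OF Gser_main[of "eps i"], of flip]
    by (simp add: G_def Ev_def flip_mult flip_power flip_1mX)
  have nsum: "n = sum eps I" using assms(4) by (simp add: fsize_def I_def)
  have key: "(\<Prod>i\<in>I. G i) * (1 + fps_X) ^ n = (\<Prod>i\<in>I. Ev i)"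
  proof -
    have "(1 + fps_X :: real fps) ^ n = (\<Prod>i\<in>I. (1 + fps_X) ^ eps i)"
      by (simp add: nsum power_sum)
    then show ?thesis by (simp add: prod.distrib[symmetric] Gi)
  qed
  have Tset: "{t\<in>Ffun r q. fsize r t = q} = Sa q"
    by (simp add: Sa_def Ffun_def fsize_def I_def)
  have "(\<Prod>i\<in>I. Ev i) $ q = (\<Sum>t\<in>Sa q. \<Prod>i\<in>I. Ev i $ t i)"
    unfolding Sa_def by (rule prod_coef[OF finI])
  also have "\<dots> = (\<Sum>t\<in>Sa q. (-1)^q * (\<Prod>i\<in>I. real (eulerian (eps i) (t i))))"
  proof (rule sum.cong)
    fix t assume "t \<in> Sa q"
    then have "sum t I = q" by (simp add: Sa_def)
    then show "(\<Prod>i\<in>I. Ev i $ t i) = (-1)^q * (\<Prod>i\<in>I. real (eulerian (eps i) (t i)))"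
      using prod_sign[of t _ I] by (simp add: Ev_def flip_nth Eser_def)
  qed simp
  also have "\<dots> = (-1)^q * EE"
    by (simp add: EE_def Tset sum_distrib_left I_def)
  finally have R: "(\<Prod>i\<in>I. Ev i) $ q = (-1)^q * EE" .
  have Gnth: "G i $ k = (-1)^k * ((real k + 1)^eps i - real k ^ eps i)" for i k
    unfolding G_def flip_nth Gser_def fps_nth_Abs_fps by (simp only: of_nat_add of_nat_1)
  have Ga: "(\<Prod>i\<in>I. G i) $ a = (-1)^a * (\<Sum>s\<in>Sa a. \<Prod>i\<in>I. P s i)" for a
  proof -
    have "(\<Prod>i\<in>I. G i) $ a = (\<Sum>s\<in>Sa a. \<Prod>i\<in>I. G i $ s i)"
      unfolding Sa_def by (rule prod_coef[OF finI])
    also have "\<dots> = (\<Sum>s\<in>Sa a. (-1)^a * (\<Prod>i\<in>I. P s i))"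
    proof (rule sum.cong)
      fix s assume "s \<in> Sa a"
      then have "sum s I = a" by (simp add: Sa_def)
      then show "(\<Prod>i\<in>I. G i $ s i) = (-1)^a * (\<Prod>i\<in>I. P s i)"
        using prod_sign[of s "P s" I] by (simp only: Gnth P_def)
    qed simp
    finally show ?thesis by (simp add: sum_distrib_left)
  qed
  have L: "((\<Prod>i\<in>I. G i) * (1 + fps_X) ^ n) $ q = (\<Sum>a=0..q. (-1)^a * real (n choose (q - a)) * (\<Sum>s\<in>Sa a. \<Prod>i\<in>I. P s i))"
    by (simp add: fps_mult_nth Ga binom_coef mult_ac)
  define F where "F s = (-1::real) ^ (fsize r s) * real (binom_int n (int q - int (fsize r s))) * (\<Prod>i\<in>I. P s i)" for s
  have LLF: "LL = sum F (Ffun r q)" by (simp add: LL_def F_def P_def I_def)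
  define S' where "S' = {s \<in> Ffun r q. fsize r s \<le> q}"
  have finF: "finite (Ffun r q)" by (simp add: Ffun_def finite_PiE)
  have "sum F (Ffun r q) = sum F S'"
    by (rule sum.mono_neutral_right[OF finF]) (auto simp: S'_def F_def binom_int_def)
  also have "\<dots> = (\<Sum>a\<in>{0..q}. sum F {s\<in>S'. fsize r s = a})"
    by (rule sum.group[symmetric]) (auto simp: S'_def finF)
  also have "\<dots> = (\<Sum>a=0..q. (-1)^a * real (n choose (q - a)) * (\<Sum>s\<in>Sa a. \<Prod>i\<in>I. P s i))"
  proof (rule sum.cong)
    fix a assume a: "a \<in> {0..q}"
    have Seq: "{s\<in>S'. fsize r s = a} = Sa a"
    proof
      show "{s\<in>S'. fsize r s = a} \<subseteq> Sa a"
      proof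
        fix s assume s0: "s \<in> {s\<in>S'. fsize r s = a}"
        then have s: "s \<in> S'" "fsize r s = a" by auto
        have "s i \<le> a" if "i \<in> I" for i
          using s that finI unfolding fsize_def S'_def I_def by (metis member_le_sum zero_le)
        then show "s \<in> Sa a" using s by (auto simp: Sa_def S'_def Ffun_def fsize_def I_def PiE_def Pi_def)
      qed
    next
      show "Sa a \<subseteq> {s\<in>S'. fsize r s = a}"
        using a by (auto simp: Sa_def S'_def Ffun_def fsize_def I_def PiE_def Pi_def)
    qed
    have "sum F (Sa a) = (\<Sum>s\<in>Sa a. (-1)^a * real (n choose (q - a)) * (\<Prod>i\<in>I. P s i))"
    proof (rule sum.cong)
      fix s assume "s \<in> Sa a"
      then have "fsize r s = a" by (simp add: Sa_def fsize_def I_def)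
      then show "F s = (-1)^a * real (n choose (q - a)) * (\<Prod>i\<in>I. P s i)"
        using a by (simp add: F_def binom_int_def nat_diff_distrib)
    qed simp
    then show "sum F {s\<in>S'. fsize r s = a} = (-1)^a * real (n choose (q - a)) * (\<Sum>s\<in>Sa a. \<Prod>i\<in>I. P s i)"
      by (simp add: Seq sum_distrib_left)
  qed simp
  finally have LLc: "LL = ((\<Prod>i\<in>I. Ev i)) $ q" using LLF L key by simp
  have LLE: "LL = (-1)^q * EE" using LLc R by simp
  have pw: "(-1::real) powi (int n - int r) = (-1) powi (int n - int q - int r) * (-1)^q"
  proof -
    have "(-1::real) powi (int n - int r) = (-1) powi ((int n - int q - int r) + int q)" by simp
    also have "\<dots> = (-1) powi (int n - int q - int r) * (-1) powi (int q)"
      by (rule power_int_add) simp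
    finally show ?thesis by simp
  qed
  have "(-1::real) powi (int n - int r) * LL = (-1) powi (int n - int q - int r) * ((-1)^q * (-1)^q) * EE"
    by (simp add: pw LLE mult_ac)
  also have "(-1::real)^q * (-1)^q = 1" by (simp flip: power_add)
  finally show ?thesis by (simp add: LL_def EE_def)
qed


end
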